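(* Let $m>1$ and $n>1$ be naturals, let $\mathcal{F}$ be a surjective linear cellular automaton over $(\mathbb{Z}/m\mathbb{Z})^n$ and let $A\in\mathbb{L}_m^{n\times n}$ be its associated matrix. Then there exists an integer $c\geq0$ (depending only on $A$) such that all of the following hold: (C1) for every $\upsilon\in\mathbb{S}_m^n$ with $\deg^+(\upsilon)=0$ there exist an integer $h$ with $-c\le h\le c$ and $\omega\in\mathbb{S}_m^n$ with $\deg^+(\omega)=h$ and $A\omega=\upsilon$; (C2) for every $\upsilon\in\mathbb{S}_m^n$ with $\deg^-(\upsilon)=0$ there exist an integer $h$ with $-c\le h\le c$ and $\omega\in\mathbb{S}_m^n$ with $\deg^-(\omega)=h$ and $A\omega=\upsilon$; (C3) for every $\upsilon\in\mathbb{S}_m^n$ with $\deg^+(\upsilon)=0$ we have $\deg^+(A\upsilon)=h$ for some integer $-c\le h\le c$; (C4) for every $\upsilon\in\mathbb{S}_m^n$ with $\deg^-(\upsilon)=0$ we have $\deg^-(A\upsilon)=h$ for some integer $-c\le h\le c$.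
   Context: $\mathbb{L}_m=\mathbb{Z}/m\mathbb{Z}[X,X^{-1}]$ and $\mathbb{S}_m=\mathbb{Z}/m\mathbb{Z}[[X,X^{-1}]]$ (bi-infinite formal series $\sum_{i\in\mathbb{Z}}a_iX^i$). An element $\upsilon\in\mathbb{S}_m^n$ is regarded as a formal series $\sum_{i\in\mathbb{Z}}v_iX^i$ with $v_i\in(\mathbb{Z}/m\mathbb{Z})^n$; for $\upsilon\neq0$, $\deg^+(\upsilon)=\sup\{i:v_i\neq0\}$ and $\deg^-(\upsilon)=\inf\{i:v_i\neq0\}$ (which may be $+\infty$, resp. $-\infty$); $\deg^+(0)=-\infty$, $\deg^-(0)=+\infty$. Matrices in $\mathbb{L}_m^{n\times n}$ act on $\mathbb{S}_m^n$ by the usual (well-defined) product. A linear cellular automaton over $(\mathbb{Z}/m\mathbb{Z})^n$ is the map $\mathcal{F}$ on $((\mathbb{Z}/m\mathbb{Z})^n)^{\mathbb{Z}}$ given by $\mathcal{F}(c)_i=\sum_{j=-r}^rA_jc_{i+j}$ for some $r\in\mathbb{N}$ and $A_j\in(\mathbb{Z}/m\mathbb{Z})^{n\times n}$; its associated matrix is $\sum_{j=-r}^rA_jX^{-j}$. It is surjective if $\mathcal{F}$ is a surjective map. *)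

theory Defs
  imports Complex_Main "HOL-Library.Extended_Real"
begin

text \<open>An element of (Z/mZ)^n is a function nat => int whose components j < n
  lie in {0..<m} and whose components j >= n are 0.  An element of S_m^n (bi-infinite formal
  series sum_i v_i X^i) and a configuration in ((Z/mZ)^n)^Z are both functions
  int => nat => int, where u i j is the j-th component of the coefficient v_i.
  A Laurent matrix in L_m^{n x n} is a function M :: int => nat => nat => int, where M k j l is
  the (j,l) entry of the coefficient of X^k (entries taken modulo m; finitely many nonzero).\<close>

definition series :: "nat \<Rightarrow> nat \<Rightarrow> (int \<Rightarrow> nat \<Rightarrow> int) \<Rightarrow> bool" where
  "series m n u \<longleftrightarrow> (\<forall>i j. (j < n \<longrightarrow> 0 \<le> u i j \<and> u i j < int m) \<and> (n \<le> j \<longrightarrow> u i j = 0))"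

text \<open>deg^+ and deg^- with values in the extended reals (covering +/- infinity);
  Sup {} = -inf and Inf {} = +inf give deg^+(0) = -inf, deg^-(0) = +inf.\<close>
definition deg_plus :: "nat \<Rightarrow> nat \<Rightarrow> (int \<Rightarrow> nat \<Rightarrow> int) \<Rightarrow> ereal" where
  "deg_plus m n u = Sup {ereal (real_of_int i) | i. \<exists>j<n. u i j mod int m \<noteq> 0}"

definition deg_minus :: "nat \<Rightarrow> nat \<Rightarrow> (int \<Rightarrow> nat \<Rightarrow> int) \<Rightarrow> ereal" where
  "deg_minus m n u = Inf {ereal (real_of_int i) | i. \<exists>j<n. u i j mod int m \<noteq> 0}"

definition lsupp :: "nat \<Rightarrow> nat \<Rightarrow> (int \<Rightarrow> nat \<Rightarrow> nat \<Rightarrow> int) \<Rightarrow> int set" where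
  "lsupp m n M = {k. \<exists>j<n. \<exists>l<n. M k j l mod int m \<noteq> 0}"

definition lmat_act :: "nat \<Rightarrow> nat \<Rightarrow> (int \<Rightarrow> nat \<Rightarrow> nat \<Rightarrow> int) \<Rightarrow> (int \<Rightarrow> nat \<Rightarrow> int)
    \<Rightarrow> (int \<Rightarrow> nat \<Rightarrow> int)" where
  "lmat_act m n M u = (\<lambda>i j. if j < n then
      (\<Sum>k\<in>lsupp m n M. \<Sum>l<n. M k j l * u (i - k) l) mod int m else 0)"

definition lca :: "nat \<Rightarrow> nat \<Rightarrow> nat \<Rightarrow> (int \<Rightarrow> nat \<Rightarrow> nat \<Rightarrow> int) \<Rightarrow> (int \<Rightarrow> nat \<Rightarrow> int)
    \<Rightarrow> (int \<Rightarrow> nat \<Rightarrow> int)" where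
  "lca m n r Aj c = (\<lambda>i j. if j < n then
      (\<Sum>t\<in>{- int r..int r}. \<Sum>l<n. Aj t j l * c (i + t) l) mod int m else 0)"

definition lca_surjective :: "nat \<Rightarrow> nat \<Rightarrow> nat \<Rightarrow> (int \<Rightarrow> nat \<Rightarrow> nat \<Rightarrow> int) \<Rightarrow> bool" where
  "lca_surjective m n r Aj \<longleftrightarrow> (\<forall>e. series m n e \<longrightarrow> (\<exists>c. series m n c \<and> lca m n r Aj c = e))"

text \<open>Associated matrix sum_{t=-r}^{r} A_t X^{-t}: coefficient of X^k is A_{-k}.\<close>
definition assoc_matrix :: "nat \<Rightarrow> (int \<Rightarrow> nat \<Rightarrow> nat \<Rightarrow> int) \<Rightarrow> (int \<Rightarrow> nat \<Rightarrow> nat \<Rightarrow> int)" where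
  "assoc_matrix r Aj = (\<lambda>k j l. if \<bar>k\<bar> \<le> int r then Aj (- k) j l else 0)"

end

theory Submission
  imports Defs "HOL-Library.FuncSet"
begin


definition rsum :: "nat \<Rightarrow> nat \<Rightarrow> (int \<Rightarrow> nat \<Rightarrow> nat \<Rightarrow> int) \<Rightarrow> (int \<Rightarrow> nat \<Rightarrow> int) \<Rightarrow> int \<Rightarrow> nat \<Rightarrow> int" where
  "rsum n r Aj x i j = (\<Sum>t\<in>{- int r..int r}. \<Sum>l<n. Aj t j l * x (i + t) l)"

lemma lca_rsum: "lca m n r Aj x i j = (if j < n then rsum n r Aj x i j mod int m else 0)"
  by (simp add: lca_def rsum_def)

lemma rsum_diff: "rsum n r Aj (\<lambda>i j. x i j - y i j) i j = rsum n r Aj x i j - rsum n r Aj y i j"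
  by (simp add: rsum_def algebra_simps sum_subtractf)

lemma rsum_add: "rsum n r Aj (\<lambda>i j. x i j + y i j) i j = rsum n r Aj x i j + rsum n r Aj y i j"
  by (simp add: rsum_def algebra_simps sum.distrib)

lemma rsum_cong_mod:
  assumes "\<And>i j. x i j mod int m = y i j mod int m"
  shows "rsum n r Aj x i j mod int m = rsum n r Aj y i j mod int m"
proof -
  have d: "int m dvd (x k l - y k l)" for k l
    using assms mod_eq_dvd_iff by blast
  have "int m dvd (\<Sum>t\<in>{- int r..int r}. \<Sum>l<n. Aj t j l * (x (i + t) l - y (i + t) l))"
    by (intro dvd_sum dvd_mult d)
  then have "int m dvd (rsum n r Aj x i j - rsum n r Aj y i j)"
    by (simp add: rsum_def algebra_simps sum_subtractf)
  then show ?thesis using mod_eq_dvd_iff by blast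
qed

lemma rsum_local:
  assumes "\<And>k l. i - int r \<le> k \<Longrightarrow> k \<le> i + int r \<Longrightarrow> x k l = y k l"
  shows "rsum n r Aj x i j = rsum n r Aj y i j"
  unfolding rsum_def by (intro sum.cong refl) (auto intro!: assms)

lemma lca_local:
  assumes "\<And>k l. i - int r \<le> k \<Longrightarrow> k \<le> i + int r \<Longrightarrow> x k l = y k l"
  shows "lca m n r Aj x i j = lca m n r Aj y i j"
  using rsum_local[OF assms] by (simp add: lca_rsum)

lemma rsum_shift: "rsum n r Aj (\<lambda>i. x (i + s)) i j = rsum n r Aj x (i + s) j"
  unfolding rsum_def by (simp add: algebra_simps)

lemma lca_shift: "lca m n r Aj (\<lambda>i. x (i + s)) i j = lca m n r Aj x (i + s) j"
  by (simp add: lca_rsum rsum_shift)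

lemma series_lca: "m > 0 \<Longrightarrow> series m n (lca m n r Aj x)"
  by (simp add: series_def lca_rsum)

lemma lca_diff:
  assumes "m > 0" "\<And>i j. z i j mod int m = (x i j - y i j) mod int m"
  shows "lca m n r Aj z i j = (if j < n then (lca m n r Aj x i j - lca m n r Aj y i j) mod int m else 0)"
proof -
  have "rsum n r Aj z i j mod int m = rsum n r Aj (\<lambda>i j. x i j - y i j) i j mod int m"
    by (rule rsum_cong_mod) (simp add: assms)
  then show ?thesis by (simp add: lca_rsum rsum_diff mod_diff_eq)
qed

lemma lca_add:
  assumes "m > 0" "\<And>i j. z i j mod int m = (x i j + y i j) mod int m"
  shows "lca m n r Aj z i j = (if j < n then (lca m n r Aj x i j + lca m n r Aj y i j) mod int m else 0)"
proof -
  have "rsum n r Aj z i j mod int m = rsum n r Aj (\<lambda>i j. x i j + y i j) i j mod int m"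
    by (rule rsum_cong_mod) (simp add: assms)
  then show ?thesis by (simp add: lca_rsum rsum_add mod_add_eq)
qed



definition blk :: "nat \<Rightarrow> nat \<Rightarrow> int \<Rightarrow> int \<Rightarrow> (int \<Rightarrow> nat \<Rightarrow> int) set" where
  "blk m n p q = {x. series m n x \<and> (\<forall>i j. (i < p \<or> q < i) \<longrightarrow> x i j = 0)}"

lemma blk_card: assumes "m > 0" shows "finite (blk m n p q) \<and> card (blk m n p q) = m ^ (n * nat (q - p + 1))"
proof -
  define D where "D = {p..q} \<times> {..<n}"
  define P where "P = PiE D (\<lambda>_. {0..<int m})"
  define g where "g = (\<lambda>f::int\<times>nat\<Rightarrow>int. \<lambda>i j. if p \<le> i \<and> i \<le> q \<and> j < n then f (i,j) else 0)"
  have fD: "finite D" unfolding D_def by simp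
  have inj: "inj_on g P"
  proof (rule inj_onI)
    fix f f' assume f: "f \<in> P" and f': "f' \<in> P" and e: "g f = g f'"
    show "f = f'"
    proof (rule extensionalityI[of _ D])
      show "f \<in> extensional D" "f' \<in> extensional D" using f f' by (auto simp: P_def PiE_def)
      fix ij assume "ij \<in> D"
      then obtain i j where ij: "ij = (i,j)" "p \<le> i" "i \<le> q" "j < n" by (auto simp: D_def)
      have "g f i j = g f' i j" using e by simp
      then show "f ij = f' ij" using ij by (simp add: g_def)
    qed
  qed
  have eq: "blk m n p q = g ` P"
  proof
    show "blk m n p q \<subseteq> g ` P"
    proof
      fix x assume x: "x \<in> blk m n p q"
      define f where "f = restrict (\<lambda>(i,j). x i j) D"
      have "f \<in> P" using x by (auto simp: f_def P_def D_def blk_def series_def)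
      moreover have "g f = x"
        using x by (auto simp: g_def f_def D_def blk_def series_def fun_eq_iff not_less)
      ultimately show "x \<in> g ` P" by blast
    qed
    show "g ` P \<subseteq> blk m n p q"
      using \<open>m > 0\<close> by (auto simp: g_def P_def D_def blk_def series_def PiE_iff)
  qed
  have cP: "card P = m ^ (nat (q - p + 1) * n)"
    unfolding P_def using fD by (simp add: card_PiE D_def card_cartesian_product)
  have "finite P" unfolding P_def using fD by (simp add: finite_PiE)
  then show ?thesis using eq inj cP by (simp add: card_image mult.commute)
qed

locale slca =
  fixes m n r :: nat and Aj :: "int \<Rightarrow> nat \<Rightarrow> nat \<Rightarrow> int"
  assumes m1: "m > 1" and surj: "lca_surjective m n r Aj"
begin

abbreviation F where "F \<equiv> lca m n r Aj"

definition K :: nat where "K = m ^ (2 * r * n)"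

definition trunc :: "int \<Rightarrow> int \<Rightarrow> (int \<Rightarrow> nat \<Rightarrow> int) \<Rightarrow> (int \<Rightarrow> nat \<Rightarrow> int)" where
  "trunc p q x = (\<lambda>i j. if p \<le> i \<and> i \<le> q then x i j else 0)"

lemma m0: "m > 0" using m1 by simp

lemma series_trunc: "series m n x \<Longrightarrow> series m n (trunc p q x)"
  using m0 by (auto simp: series_def trunc_def)

lemma mod_cancel_aux:
  fixes a k k' M :: int
  assumes "0 \<le> k" "k < M" "0 \<le> k'" "k' < M" "(a + k) mod M = (a + k') mod M"
  shows "k = k'"
proof -
  have "k mod M = ((a + k) mod M - a) mod M" by (simp add: mod_diff_left_eq)
  also have "\<dots> = ((a + k') mod M - a) mod M" using assms(5) by simp
  also have "\<dots> = k' mod M" by (simp add: mod_diff_left_eq)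
  finally have "k mod M = k' mod M" .
  then show ?thesis using assms by simp
qed

lemma kernel_bound:
  assumes ab: "a \<le> b + 1"
    and S: "S \<subseteq> {x \<in> blk m n (a - int r) (b + int r). \<forall>i j. a \<le> i \<and> i \<le> b \<longrightarrow> F x i j = 0}"
  shows "finite S \<and> card S \<le> K"
proof -
  define Out where "Out = blk m n a b"
  define Blk where "Blk = blk m n (a - int r) (b + int r)"
  define Z where "Z = {x \<in> Blk. \<forall>i j. a \<le> i \<and> i \<le> b \<longrightarrow> F x i j = 0}"
  have pre: "\<exists>x\<in>Blk. \<forall>i j. a \<le> i \<and> i \<le> b \<longrightarrow> F x i j = y i j" if y: "y \<in> Out" for y
  proof -
    have "series m n y" using y by (simp add: Out_def blk_def)
    then obtain c where c: "series m n c" "F c = y" using surj by (auto simp: lca_surjective_def)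
    define x where "x = trunc (a - int r) (b + int r) c"
    have "x \<in> Blk" using c by (auto simp: x_def Blk_def blk_def series_trunc) (auto simp: trunc_def)
    moreover have "F x i j = y i j" if "a \<le> i" "i \<le> b" for i j
    proof -
      have "F x i j = F c i j"
        by (rule lca_local) (use that in \<open>auto simp: x_def trunc_def\<close>)
      then show ?thesis using c by simp
    qed
    ultimately show ?thesis by blast
  qed
  then obtain g where g: "\<And>y. y \<in> Out \<Longrightarrow> g y \<in> Blk \<and> (\<forall>i j. a \<le> i \<and> i \<le> b \<longrightarrow> F (g y) i j = y i j)"
    by metis
  define \<Phi> where "\<Phi> = (\<lambda>(y, k). \<lambda>i j. (g y i j + k i j) mod int m)"
  have img: "\<Phi> ` (Out \<times> Z) \<subseteq> Blk"
  proof safe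
    fix y k assume y: "y \<in> Out" and k: "k \<in> Z"
    have "g y \<in> Blk" using g y by blast
    then show "\<Phi> (y, k) \<in> Blk" using k m0
      by (auto simp: \<Phi>_def Blk_def Z_def blk_def series_def)
  qed
  have inj: "inj_on \<Phi> (Out \<times> Z)"
  proof (rule inj_onI, clarify)
    fix y k y' k' assume y: "y \<in> Out" and k: "k \<in> Z" and y': "y' \<in> Out" and k': "k' \<in> Z"
      and e: "\<Phi> (y, k) = \<Phi> (y', k')"
    have Fy: "F (\<Phi> (y, k)) i j = y i j" if "y \<in> Out" "k \<in> Z" "a \<le> i" "i \<le> b" for y k i j
    proof -
      have "F (\<Phi> (y, k)) i j = (if j < n then (F (g y) i j + F k i j) mod int m else 0)"
        by (rule lca_add[OF m0]) (simp add: \<Phi>_def)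
      also have "\<dots> = (if j < n then y i j mod int m else 0)"
        using g[OF that(1)] that(2-4) by (simp add: Z_def)
      also have "\<dots> = y i j" using that(1) by (auto simp: Out_def blk_def series_def)
      finally show ?thesis .
    qed
    have yy: "y = y'"
    proof (intro ext)
      fix i j
      show "y i j = y' i j"
      proof (cases "a \<le> i \<and> i \<le> b")
        case True
        then show ?thesis using Fy[OF y k] Fy[OF y' k'] e by metis
      next
        case False
        then show ?thesis using y y' by (auto simp: Out_def blk_def)
      qed
    qed
    have "k = k'"
    proof (intro ext)
      fix i j
      have ee: "(g y i j + k i j) mod int m = (g y i j + k' i j) mod int m"
        using e unfolding yy by (simp add: \<Phi>_def fun_eq_iff)
      show "k i j = k' i j"
      proof (cases "j < n")
        case True
        then show ?thesis using k k' ee mod_cancel_aux[of "k i j" "int m" "k' i j" "g y i j"]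
          by (auto simp: Z_def Blk_def blk_def series_def)
      next
        case False
        then show ?thesis using k k' by (auto simp: Z_def Blk_def blk_def series_def)
      qed
    qed
    then show "y = y' \<and> k = k'" using yy by simp
  qed
  have fB: "finite Blk" and cB: "card Blk = m ^ (n * nat (b + int r - (a - int r) + 1))"
    using blk_card[OF m0] unfolding Blk_def by auto
  have cO: "card Out = m ^ (n * nat (b - a + 1))" using blk_card[OF m0] unfolding Out_def by auto
  have fZ: "finite Z" using fB by (rule finite_subset[rotated]) (auto simp: Z_def)
  have "card (Out \<times> Z) \<le> card Blk" by (rule card_inj_on_le[OF inj img fB])
  then have "card Out * card Z \<le> card Blk" by (simp add: card_cartesian_product)
  moreover have "nat (b + int r - (a - int r) + 1) = nat (b - a + 1) + 2 * r" using ab by simp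
  ultimately have "m ^ (n * nat (b - a + 1)) * card Z \<le> m ^ (n * nat (b - a + 1)) * K"
    using cB cO by (simp add: K_def power_add distrib_left mult.commute mult.left_commute)
  then have "card Z \<le> K" using m0 by simp
  moreover have "S \<subseteq> Z" using S by (simp add: Z_def Blk_def)
  ultimately show ?thesis using fZ by (meson card_mono finite_subset order_trans)
qed

end



lemma int_max_exists:
  fixes S :: "int set"
  assumes "S \<noteq> {}" "\<And>i. i \<in> S \<Longrightarrow> i \<le> B"
  shows "\<exists>h\<in>S. \<forall>i\<in>S. i \<le> h"
proof -
  define T where "T = {k::nat. B - int k \<in> S}"
  obtain i0 where "i0 \<in> S" using assms(1) by blast
  then have "nat (B - i0) \<in> T" using assms(2)[of i0] by (simp add: T_def)
  define k0 where "k0 = (LEAST k. k \<in> T)"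
  have k0T: "k0 \<in> T" unfolding k0_def by (rule LeastI) fact
  have "i \<le> B - int k0" if "i \<in> S" for i
  proof -
    have "nat (B - i) \<in> T" using that assms(2)[of i] by (simp add: T_def)
    then have "k0 \<le> nat (B - i)" unfolding k0_def by (rule Least_le)
    then show ?thesis using assms(2)[OF that] by simp
  qed
  then show ?thesis using k0T by (auto simp: T_def)
qed

lemma lca_zero: "lca m n r Aj (\<lambda>_ _. 0) i j = 0"
  by (simp add: lca_rsum rsum_def)

context slca
begin

definition top :: "(int \<Rightarrow> nat \<Rightarrow> int) \<Rightarrow> int \<Rightarrow> bool" where
  "top x h \<longleftrightarrow> (\<exists>j<n. x h j \<noteq> 0) \<and> (\<forall>i>h. \<forall>j. x i j = 0)"

lemma core_upper:
  assumes "top u h" "i > h + int r"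
  shows "F u i j = 0"
proof -
  have "F u i j = F (\<lambda>_ _. 0) i j"
    by (rule lca_local) (use assms in \<open>auto simp: top_def\<close>)
  then show ?thesis by (simp add: lca_zero)
qed

lemma core_lower:
  assumes u: "series m n u" "top u h"
  shows "\<exists>i \<ge> h - int K. \<exists>j<n. F u i j \<noteq> 0"
proof (rule ccontr)
  assume "\<not> ?thesis"
  then have Z: "F u i j = 0" if "i \<ge> h - int K" for i j
    using that by (cases "j < n") (auto simp: lca_rsum)
  obtain j0 where j0: "j0 < n" "u h j0 \<noteq> 0" using u by (auto simp: top_def)
  define xs where "xs = (\<lambda>s. trunc (h - int K - int r) (h + int r) (\<lambda>i. u (i + s)))"
  have sub: "xs ` {0..int K} \<subseteq> {x \<in> blk m n ((h - int K) - int r) (h + int r).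
      \<forall>i j. h - int K \<le> i \<and> i \<le> h \<longrightarrow> F x i j = 0}"
  proof safe
    fix s assume s: "s \<in> {0..int K}"
    have "series m n (\<lambda>i. u (i + s))" using u by (auto simp: series_def)
    then show "xs s \<in> blk m n (h - int K - int r) (h + int r)"
      by (auto simp: blk_def xs_def series_trunc) (auto simp: trunc_def)
    fix i j assume i: "h - int K \<le> i" "i \<le> h"
    have "F (xs s) i j = F (\<lambda>i. u (i + s)) i j"
      by (rule lca_local) (use i in \<open>auto simp: xs_def trunc_def\<close>)
    also have "\<dots> = F u (i + s) j" by (rule lca_shift)
    also have "\<dots> = 0" by (rule Z) (use i s in auto)
    finally show "F (xs s) i j = 0" .
  qed
  have inj: "inj_on xs {0..int K}"
  proof -
    have "xs s \<noteq> xs s'" if "s \<in> {0..int K}" "s' \<in> {0..int K}" "s < s'" for s s'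
    proof -
      have "xs s (h - s) j0 = u h j0" using that by (simp add: xs_def trunc_def)
      moreover have "xs s' (h - s) j0 = 0" using that u by (simp add: xs_def trunc_def top_def)
      ultimately show ?thesis using j0 by force
    qed
    then show ?thesis unfolding inj_on_def by (metis linorder_neqE)
  qed
  have "card (xs ` {0..int K}) \<le> K"
    using kernel_bound[OF _ sub] by simp
  then show False using inj by (simp add: card_image)
qed

lemma top_bound:
  assumes "series m n w" "top w h" "top (F w) h'"
  shows "h - int K \<le> h' \<and> h' \<le> h + int r"
proof
  obtain i j where "i \<ge> h - int K" "j < n" "F w i j \<noteq> 0" using core_lower assms by blast
  then show "h - int K \<le> h'" using assms(3) unfolding top_def by (meson leI order.trans)
  obtain j where "F w h' j \<noteq> 0" using assms(3) by (auto simp: top_def)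
  then show "h' \<le> h + int r" using core_upper[OF assms(2)] by (meson leI)
qed

lemma exists_top:
  assumes "series m n x" "\<exists>i j. x i j \<noteq> 0" "\<And>i j. x i j \<noteq> 0 \<Longrightarrow> i \<le> B"
  shows "\<exists>h. top x h"
proof -
  define S where "S = {i. \<exists>j<n. x i j \<noteq> 0}"
  have "S \<noteq> {}" using assms(1,2) by (auto simp: S_def series_def) (metis leI)
  moreover have "i \<le> B" if "i \<in> S" for i using that assms(3) by (auto simp: S_def)
  ultimately obtain h where h: "h \<in> S" "\<forall>i\<in>S. i \<le> h" using int_max_exists by metis
  have "top x h" unfolding top_def
  proof safe
    show "\<exists>j<n. x h j \<noteq> 0" using h by (auto simp: S_def)
    fix i j assume "h < i"
    then show "x i j = 0" using h assms(1) by (cases "j < n") (auto simp: S_def series_def)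
  qed
  then show ?thesis ..
qed

lemma C3_core:
  assumes "series m n u" "top u 0"
  shows "\<exists>h. - int K \<le> h \<and> h \<le> int r \<and> top (F u) h"
proof -
  have "\<exists>i j. F u i j \<noteq> 0" using core_lower[OF assms] by blast
  moreover have "i \<le> int r" if "F u i j \<noteq> 0" for i j using core_upper[OF assms(2)] that by force
  ultimately obtain h where h: "top (F u) h" using exists_top[OF series_lca[OF m0]] by blast
  then show ?thesis using top_bound[OF assms h] by auto
qed

end



context slca
begin

definition H :: "(int \<Rightarrow> nat \<Rightarrow> int) set" where
  "H = {x. series m n x \<and> (\<forall>i j. i < - int r \<longrightarrow> x i j = 0) \<and> (\<forall>i j. 0 \<le> i \<longrightarrow> F x i j = 0)}"

lemma H_finite_sub:
  assumes fS: "finite S" and SH: "S \<subseteq> H"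
  shows "card S \<le> K"
proof -
  define d :: "(int \<Rightarrow> nat \<Rightarrow> int) \<Rightarrow> (int \<Rightarrow> nat \<Rightarrow> int) \<Rightarrow> int"
    where "d = (\<lambda>x y. SOME i. \<exists>j. x i j \<noteq> y i j)"
  define B where "B = Max (insert (int r) ((\<lambda>(x, y). d x y) ` {(x, y). (x, y) \<in> S \<times> S \<and> x \<noteq> y}))"
  have finB: "finite (insert (int r) ((\<lambda>(x, y). d x y) ` {(x, y). (x, y) \<in> S \<times> S \<and> x \<noteq> y}))"
    using fS by (intro finite.insertI finite_imageI) (auto intro: finite_subset[of _ "S \<times> S"])
  have Br: "int r \<le> B" unfolding B_def using finB by simp
  define T where "T = trunc (- int r) B"
  have inj: "inj_on T S"
  proof (rule inj_onI, rule ccontr)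
    fix x y assume x: "x \<in> S" and y: "y \<in> S" and e: "T x = T y" and ne: "x \<noteq> y"
    then have "\<exists>i j. x i j \<noteq> y i j" by (auto simp: fun_eq_iff)
    then have "\<exists>j. x (d x y) j \<noteq> y (d x y) j" unfolding d_def by (rule someI_ex)
    then obtain j where j: "x (d x y) j \<noteq> y (d x y) j" by blast
    have "d x y \<le> B" unfolding B_def using finB x y ne by (intro Max_ge) auto
    moreover have "- int r \<le> d x y"
    proof (rule ccontr)
      assume "\<not> - int r \<le> d x y"
      then have "x (d x y) j = 0" "y (d x y) j = 0" using x y SH by (auto simp: H_def)
      then show False using j by simp
    qed
    ultimately have "T x (d x y) j \<noteq> T y (d x y) j" using j by (simp add: T_def trunc_def)
    then show False using e by simp
  qed
  have sub: "T ` S \<subseteq> {x \<in> blk m n (0 - int r) ((B - int r) + int r).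
      \<forall>i j. 0 \<le> i \<and> i \<le> B - int r \<longrightarrow> F x i j = 0}"
  proof safe
    fix x assume x: "x \<in> S"
    then have xs: "series m n x" using SH by (auto simp: H_def)
    show "T x \<in> blk m n (0 - int r) (B - int r + int r)"
      using xs by (auto simp: blk_def T_def series_trunc) (auto simp: trunc_def)
    fix i j assume i: "0 \<le> i" "i \<le> B - int r"
    have "F (T x) i j = F x i j"
      by (rule lca_local) (use i in \<open>auto simp: T_def trunc_def\<close>)
    also have "\<dots> = 0" using x SH i by (auto simp: H_def)
    finally show "F (T x) i j = 0" .
  qed
  have "card (T ` S) \<le> K" using kernel_bound[OF _ sub] Br by simp
  then show ?thesis using inj by (simp add: card_image)
qed

lemma H_finite: "finite H \<and> card H \<le> K"
proof -
  have "finite H"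
  proof (rule ccontr)
    assume "infinite H"
    then obtain S where "S \<subseteq> H" "finite S" "card S = Suc K"
      using infinite_arbitrarily_large by blast
    then show False using H_finite_sub by fastforce
  qed
  then show ?thesis using H_finite_sub by blast
qed

lemma C1_core:
  assumes u: "series m n u" "top u 0"
  shows "\<exists>h w. - int r \<le> h \<and> h \<le> int K \<and> series m n w \<and> top w h \<and> F w = u"
proof -
  obtain w0 where w0: "series m n w0" "F w0 = u" using surj u by (auto simp: lca_surjective_def)
  have u0: "u i j = 0" if "i > 0" for i j using u that by (auto simp: top_def)
  define \<tau> where "\<tau> = (\<lambda>s::int. \<lambda>i jj. if i \<ge> - int r then w0 (i + s) jj else 0)"
  have tH: "\<tau> s \<in> H" if "s \<ge> 1" for s
  proof -
    have "series m n (\<tau> s)" using w0 m0 by (auto simp: series_def \<tau>_def)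
    moreover have "F (\<tau> s) i jj = 0" if "0 \<le> i" for i jj
    proof -
      have "F (\<tau> s) i jj = F (\<lambda>i. w0 (i + s)) i jj"
        by (rule lca_local) (use that in \<open>auto simp: \<tau>_def\<close>)
      also have "\<dots> = F w0 (i + s) jj" by (rule lca_shift)
      also have "\<dots> = 0" using w0 u0 \<open>s \<ge> 1\<close> that by simp
      finally show ?thesis .
    qed
    ultimately show ?thesis by (auto simp: H_def \<tau>_def)
  qed
  have "\<not> inj_on \<tau> {1..int K + 1}"
  proof
    assume inj: "inj_on \<tau> {1..int K + 1}"
    have "\<tau> ` {1..int K + 1} \<subseteq> H" using tH by auto
    then have "card {1..int K + 1} \<le> card H" using card_inj_on_le[OF inj] H_finite by blast
    moreover have "card {1..int K + 1} = K + 1" by (simp add: nat_int_add)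
    ultimately show False using H_finite by simp
  qed
  then obtain j1 j2 where j: "j1 \<in> {1..int K + 1}" "j2 \<in> {1..int K + 1}" "j1 < j2" "\<tau> j1 = \<tau> j2"
    unfolding inj_on_def by (metis linorder_neqE)
  define p where "p = j2 - j1"
  have p: "p \<ge> 1" using j by (simp add: p_def)
  have per: "w0 (k + p) = w0 k" if "k \<ge> j1 - int r" for k
  proof -
    have "\<tau> j1 (k - j1) = \<tau> j2 (k - j1)" using j by simp
    then show ?thesis using that by (auto simp: \<tau>_def fun_eq_iff p_def algebra_simps)
  qed
  have perq: "w0 (j1 + \<rho> + int q * p) = w0 (j1 + \<rho>)" if "\<rho> \<ge> 0" for \<rho> q
  proof (induction q)
    case 0 then show ?case by simp
  next
    case (Suc q)
    have "w0 (j1 + \<rho> + int (Suc q) * p) = w0 ((j1 + \<rho> + int q * p) + p)"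
      by (simp add: algebra_simps)
    also have "\<dots> = w0 (j1 + \<rho> + int q * p)"
    proof (rule per)
      have "0 \<le> int q * p" using p by simp
      then show "j1 + \<rho> + int q * p \<ge> j1 - int r" using that by linarith
    qed
    finally show ?case using Suc by simp
  qed
  define z where "z = (\<lambda>i jj. w0 (j1 + (i - j1) mod p) jj)"
  have agree: "w0 k = z k" if "k \<ge> j1" for k
  proof -
    define q where "q = nat ((k - j1) div p)"
    have "k = j1 + (k - j1) mod p + int q * p"
    proof -
      have "0 \<le> (k - j1) div p" using that p by (simp add: pos_imp_zdiv_nonneg_iff)
      then have "int q = (k - j1) div p" by (simp add: q_def)
      then have "int q * p = (k - j1) div p * p" by simp
      moreover have "(k - j1) div p * p + (k - j1) mod p = k - j1" by (rule div_mult_mod_eq)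
      ultimately show ?thesis by linarith
    qed
    then have "w0 k = w0 (j1 + (k - j1) mod p + int q * p)" by simp
    also have "\<dots> = w0 (j1 + (k - j1) mod p)" by (rule perq) (use p in simp)
    finally show ?thesis by (simp add: z_def fun_eq_iff)
  qed
  have zper: "(\<lambda>i. z (i + p)) = z"
  proof (intro ext)
    fix i jj
    have "(i + p - j1) mod p = ((i - j1) + p) mod p" by (simp add: algebra_simps)
    also have "\<dots> = (i - j1) mod p" by simp
    finally show "z (i + p) jj = z i jj" by (simp add: z_def)
  qed
  have zN: "F z (i + int N * p) jj = F z i jj" for i N jj
  proof (induction N)
    case 0 then show ?case by simp
  next
    case (Suc N)
    have "F z (i + int (Suc N) * p) jj = F z ((i + int N * p) + p) jj" by (simp add: algebra_simps)
    also have "\<dots> = F (\<lambda>k. z (k + p)) (i + int N * p) jj" by (rule lca_shift[symmetric])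
    also have "\<dots> = F z (i + int N * p) jj" by (simp add: zper)
    finally show ?case using Suc by simp
  qed
  have Fz: "F z i jj = 0" for i jj
  proof -
    define N where "N = nat (\<bar>i\<bar> + \<bar>j1\<bar> + int r + 1)"
    have "int N \<le> int N * p" using mult_left_mono[OF p, of "int N"] by simp
    moreover have "int N = \<bar>i\<bar> + \<bar>j1\<bar> + int r + 1" by (simp add: N_def)
    ultimately have big: "i + int N * p \<ge> j1 + int r + 1" by linarith
    have "F z i jj = F z (i + int N * p) jj" by (rule zN[symmetric])
    also have "\<dots> = F w0 (i + int N * p) jj"
      by (rule lca_local) (use big agree in auto)
    also have "\<dots> = 0" using w0 u0 big j by simp
    finally show ?thesis .
  qed
  define w where "w = (\<lambda>i jj. (w0 i jj - z i jj) mod int m)"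
  have ws: "series m n w" using w0 m0 by (auto simp: series_def w_def z_def)
  have Fw: "F w = u"
  proof (intro ext)
    fix i jj
    have "F w i jj = (if jj < n then (F w0 i jj - F z i jj) mod int m else 0)"
      by (rule lca_diff[OF m0]) (simp add: w_def)
    also have "\<dots> = u i jj" using w0 u Fz by (auto simp: series_def)
    finally show "F w i jj = u i jj" .
  qed
  have wz: "w i jj = 0" if "i \<ge> j1" for i jj using agree[OF that] by (simp add: w_def)
  have "\<exists>i jj. w i jj \<noteq> 0"
  proof (rule ccontr)
    assume "\<not> ?thesis"
    then have wz0: "w = (\<lambda>_ _. 0)" by auto
    have "F w i jj = 0" for i jj by (subst wz0) (rule lca_zero)
    then have "F w = (\<lambda>_ _. 0)" by auto
    then show False using Fw u by (auto simp: top_def fun_eq_iff)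
  qed
  moreover have "i \<le> j1" if "w i jj \<noteq> 0" for i jj using wz[of i jj] that by force
  ultimately obtain h where h: "top w h" using exists_top[OF ws, of j1] by blast
  have "top (F w) 0" using Fw u by simp
  then have "h - int K \<le> 0 \<and> 0 \<le> h + int r" using top_bound[OF ws h] by blast
  then have "- int r \<le> h \<and> h \<le> int K" by linarith
  then show ?thesis using ws h Fw by blast
qed

end



definition topg :: "nat \<Rightarrow> (int \<Rightarrow> nat \<Rightarrow> int) \<Rightarrow> int \<Rightarrow> bool" where
  "topg n x h \<longleftrightarrow> (\<exists>j<n. x h j \<noteq> 0) \<and> (\<forall>i>h. \<forall>j. x i j = 0)"

definition botg :: "nat \<Rightarrow> (int \<Rightarrow> nat \<Rightarrow> int) \<Rightarrow> int \<Rightarrow> bool" where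
  "botg n x h \<longleftrightarrow> (\<exists>j<n. x h j \<noteq> 0) \<and> (\<forall>i<h. \<forall>j. x i j = 0)"

definition rfl :: "(int \<Rightarrow> nat \<Rightarrow> int) \<Rightarrow> (int \<Rightarrow> nat \<Rightarrow> int)" where
  "rfl x = (\<lambda>i. x (- i))"

lemma rfl_rfl[simp]: "rfl (rfl x) = x" by (simp add: rfl_def)

lemma series_rfl[simp]: "series m n (rfl x) \<longleftrightarrow> series m n x"
  unfolding series_def rfl_def by (metis minus_minus)

lemma botg_rfl: "botg n x h \<longleftrightarrow> topg n (rfl x) (- h)"
  unfolding botg_def topg_def rfl_def by (metis minus_less_iff minus_minus)

lemma sup_char:
  fixes S :: "int set"
  shows "Sup {ereal (real_of_int i) | i. i \<in> S} = ereal (real_of_int h) \<longleftrightarrow> (h \<in> S \<and> (\<forall>i\<in>S. i \<le> h))"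
proof
  assume h: "h \<in> S \<and> (\<forall>i\<in>S. i \<le> h)"
  show "Sup {ereal (real_of_int i) | i. i \<in> S} = ereal (real_of_int h)"
  proof (rule antisym)
    show "Sup {ereal (real_of_int i) | i. i \<in> S} \<le> ereal (real_of_int h)"
      using h by (intro Sup_least) auto
    show "ereal (real_of_int h) \<le> Sup {ereal (real_of_int i) | i. i \<in> S}"
      using h by (intro Sup_upper) auto
  qed
next
  assume e: "Sup {ereal (real_of_int i) | i. i \<in> S} = ereal (real_of_int h)"
  have le: "i \<le> h" if "i \<in> S" for i
  proof -
    have "ereal (real_of_int i) \<le> Sup {ereal (real_of_int i) | i. i \<in> S}"
      using that by (intro Sup_upper) auto
    then show ?thesis using e by simp
  qed
  have "h \<in> S"
  proof (rule ccontr)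
    assume "h \<notin> S"
    then have "i \<le> h - 1" if "i \<in> S" for i using le[OF that] that by (cases "i = h") auto
    then have "ereal (real_of_int i) \<le> ereal (real_of_int (h - 1))" if "i \<in> S" for i
      using that by (simp only: ereal_less_eq(3) of_int_le_iff)
    then have "Sup {ereal (real_of_int i) | i. i \<in> S} \<le> ereal (real_of_int (h - 1))"
      by (intro Sup_least) auto
    then show False using e by simp
  qed
  then show "h \<in> S \<and> (\<forall>i\<in>S. i \<le> h)" using le by blast
qed

lemma inf_char:
  fixes S :: "int set"
  shows "Inf {ereal (real_of_int i) | i. i \<in> S} = ereal (real_of_int h) \<longleftrightarrow> (h \<in> S \<and> (\<forall>i\<in>S. h \<le> i))"
proof
  assume h: "h \<in> S \<and> (\<forall>i\<in>S. h \<le> i)"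
  show "Inf {ereal (real_of_int i) | i. i \<in> S} = ereal (real_of_int h)"
  proof (rule antisym)
    show "ereal (real_of_int h) \<le> Inf {ereal (real_of_int i) | i. i \<in> S}"
      using h by (intro Inf_greatest) auto
    show "Inf {ereal (real_of_int i) | i. i \<in> S} \<le> ereal (real_of_int h)"
      using h by (intro Inf_lower) auto
  qed
next
  assume e: "Inf {ereal (real_of_int i) | i. i \<in> S} = ereal (real_of_int h)"
  have le: "h \<le> i" if "i \<in> S" for i
  proof -
    have "Inf {ereal (real_of_int i) | i. i \<in> S} \<le> ereal (real_of_int i)"
      using that by (intro Inf_lower) auto
    then show ?thesis using e by simp
  qed
  have "h \<in> S"
  proof (rule ccontr)
    assume "h \<notin> S"
    then have "h + 1 \<le> i" if "i \<in> S" for i using le[OF that] that by (cases "i = h") auto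
    then have "ereal (real_of_int (h + 1)) \<le> ereal (real_of_int i)" if "i \<in> S" for i
      using that by (simp only: ereal_less_eq(3) of_int_le_iff)
    then have "ereal (real_of_int (h + 1)) \<le> Inf {ereal (real_of_int i) | i. i \<in> S}"
      by (intro Inf_greatest) auto
    then show False using e by simp
  qed
  then show "h \<in> S \<and> (\<forall>i\<in>S. h \<le> i)" using le by blast
qed

lemma series_set:
  assumes "m > 0" "series m n x"
  shows "{ereal (real_of_int i) | i. \<exists>j<n. x i j mod int m \<noteq> 0} =
         {ereal (real_of_int i) | i. i \<in> {i. \<exists>j<n. x i j \<noteq> 0}}"
proof -
  have mm: "x i j mod int m = x i j" if "j < n" for i j using assms that by (simp add: series_def)
  show ?thesis by (auto simp: mm) (metis mm)
qed

lemma deg_plus_iff: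
  assumes "m > 0" "series m n x"
  shows "deg_plus m n x = ereal (real_of_int h) \<longleftrightarrow> topg n x h"
  unfolding deg_plus_def series_set[OF assms] sup_char topg_def
  using assms(2) by (auto simp: series_def; metis not_le not_less)

lemma deg_minus_iff:
  assumes "m > 0" "series m n x"
  shows "deg_minus m n x = ereal (real_of_int h) \<longleftrightarrow> botg n x h"
  unfolding deg_minus_def series_set[OF assms] inf_char botg_def
  using assms(2) by (auto simp: series_def; metis not_le not_less)

lemma sum_neg_reindex: "(\<Sum>t\<in>{- int r..int r}. f (- t)) = (\<Sum>t\<in>{- int r..int r}. (f t :: int))"
  by (rule sum.reindex_bij_witness[of _ uminus uminus]) auto

lemma lca_rfl: "lca m n r (\<lambda>t. Aj (- t)) (rfl c) = rfl (lca m n r Aj c)"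
proof (intro ext)
  fix i j
  have "rsum n r (\<lambda>t. Aj (- t)) (rfl c) i j = rsum n r Aj c (- i) j"
    unfolding rsum_def rfl_def
    using sum_neg_reindex[where r=r and f="\<lambda>t. \<Sum>l<n. Aj t j l * c (- i + t) l"] by simp
  then show "lca m n r (\<lambda>t. Aj (- t)) (rfl c) i j = rfl (lca m n r Aj c) i j"
    by (simp add: lca_rsum rfl_def)
qed

lemma surj_rfl:
  assumes "lca_surjective m n r Aj"
  shows "lca_surjective m n r (\<lambda>t. Aj (- t))"
  unfolding lca_surjective_def
proof safe
  fix e assume "series m n e"
  then obtain c where "series m n c" "lca m n r Aj c = rfl e"
    using assms series_rfl unfolding lca_surjective_def by blast
  then show "\<exists>c. series m n c \<and> lca m n r (\<lambda>t. Aj (- t)) c = e"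
    by (intro exI[of _ "rfl c"]) (simp add: lca_rfl)
qed

lemma lmat_act_lca:
  assumes "m > 0"
  shows "lmat_act m n (assoc_matrix r Aj) u = lca m n r Aj u"
proof (intro ext)
  fix i j
  define A where "A = assoc_matrix r Aj"
  define g where "g = (\<lambda>k. \<Sum>l<n. A k j l * u (i - k) l)"
  show "lmat_act m n (assoc_matrix r Aj) u i j = lca m n r Aj u i j"
  proof (cases "j < n")
    case False then show ?thesis by (simp add: lmat_act_def lca_def)
  next
    case True
    have sub: "lsupp m n A \<subseteq> {- int r..int r}"
      by (auto simp: lsupp_def A_def assoc_matrix_def)
    have "sum g {- int r..int r} = sum g (lsupp m n A) + sum g ({- int r..int r} - lsupp m n A)"
      using sub by (metis add.commute finite_atLeastAtMost_int sum.subset_diff)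
    moreover have "int m dvd sum g ({- int r..int r} - lsupp m n A)"
    proof (intro dvd_sum)
      fix k assume "k \<in> {- int r..int r} - lsupp m n A"
      then have "int m dvd A k j l" if "l < n" for l
        using True that by (auto simp: lsupp_def dvd_eq_mod_eq_0)
      then show "int m dvd g k" unfolding g_def by (intro dvd_sum dvd_mult2) auto
    qed
    ultimately have "sum g (lsupp m n A) mod int m = sum g {- int r..int r} mod int m"
      by (metis mod_add_self2 dvd_def mult.commute mod_mult_self2)
    moreover have "sum g {- int r..int r} = rsum n r Aj u i j"
    proof -
      have "sum g {- int r..int r} = (\<Sum>k\<in>{- int r..int r}. \<Sum>l<n. Aj (- k) j l * u (i - k) l)"
        by (intro sum.cong refl) (auto simp: g_def A_def assoc_matrix_def abs_le_iff)
      also have "\<dots> = rsum n r Aj u i j"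
        unfolding rsum_def using sum_neg_reindex[where r=r and f="\<lambda>k. \<Sum>l<n. Aj (- k) j l * u (i - k) l"]
        by simp
      finally show ?thesis .
    qed
    ultimately show ?thesis using True by (simp add: lmat_act_def lca_rsum A_def g_def)
  qed
qed

lemma (in slca) top_eq: "top x h \<longleftrightarrow> topg n x h"
  by (simp add: top_def topg_def)

lemma (in slca) main_half:
  "\<exists>c::nat.
    (\<forall>u. series m n u \<and> deg_plus m n u = 0 \<longrightarrow>
       (\<exists>h::int. - int c \<le> h \<and> h \<le> int c \<and>
          (\<exists>w. series m n w \<and> deg_plus m n w = ereal (real_of_int h) \<and> F w = u))) \<and>
    (\<forall>u. series m n u \<and> deg_plus m n u = 0 \<longrightarrow>
       (\<exists>h::int. - int c \<le> h \<and> h \<le> int c \<and> deg_plus m n (F u) = ereal (real_of_int h)))"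
proof (intro exI[of _ "max K r"] conjI allI impI)
  fix u assume u: "series m n u \<and> deg_plus m n u = 0"
  then have t: "top u 0" using deg_plus_iff[OF m0, of n u 0] by (simp add: top_eq zero_ereal_def)
  obtain h w where hw: "- int r \<le> h" "h \<le> int K" "series m n w" "top w h" "F w = u"
    using C1_core[OF conjunct1[OF u] t] by blast
  then show "\<exists>h::int. - int (max K r) \<le> h \<and> h \<le> int (max K r) \<and>
          (\<exists>w. series m n w \<and> deg_plus m n w = ereal (real_of_int h) \<and> F w = u)"
    by (intro exI[of _ h] conjI exI[of _ w]) (auto simp: deg_plus_iff[OF m0] top_eq)
next
  fix u assume u: "series m n u \<and> deg_plus m n u = 0"
  then have t: "top u 0" using deg_plus_iff[OF m0, of n u 0] by (simp add: top_eq zero_ereal_def)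
  obtain h where h: "- int K \<le> h" "h \<le> int r" "top (F u) h"
    using C3_core[OF conjunct1[OF u] t] by blast
  then show "\<exists>h::int. - int (max K r) \<le> h \<and> h \<le> int (max K r) \<and> deg_plus m n (F u) = ereal (real_of_int h)"
    by (intro exI[of _ h] conjI) (auto simp: deg_plus_iff[OF m0 series_lca[OF m0]] top_eq)
qed


theorem lemma3:
  fixes m n r :: nat and Aj :: "int \<Rightarrow> nat \<Rightarrow> nat \<Rightarrow> int"
  assumes "m > 1" and "n > 1"
    and "lca_surjective m n r Aj"
  defines "A \<equiv> assoc_matrix r Aj"
  shows "\<exists>c::nat.
    (\<forall>u. series m n u \<and> deg_plus m n u = 0 \<longrightarrow>
       (\<exists>h::int. - int c \<le> h \<and> h \<le> int c \<and>
          (\<exists>w. series m n w \<and> deg_plus m n w = ereal (real_of_int h) \<and> lmat_act m n A w = u))) \<and>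
    (\<forall>u. series m n u \<and> deg_minus m n u = 0 \<longrightarrow>
       (\<exists>h::int. - int c \<le> h \<and> h \<le> int c \<and>
          (\<exists>w. series m n w \<and> deg_minus m n w = ereal (real_of_int h) \<and> lmat_act m n A w = u))) \<and>
    (\<forall>u. series m n u \<and> deg_plus m n u = 0 \<longrightarrow>
       (\<exists>h::int. - int c \<le> h \<and> h \<le> int c \<and> deg_plus m n (lmat_act m n A u) = ereal (real_of_int h))) \<and>
    (\<forall>u. series m n u \<and> deg_minus m n u = 0 \<longrightarrow>
       (\<exists>h::int. - int c \<le> h \<and> h \<le> int c \<and> deg_minus m n (lmat_act m n A u) = ereal (real_of_int h)))"
proof -
  have m0: "m > 0" using assms(1) by simp
  interpret S1: slca m n r Aj using assms by unfold_locales
  interpret S2: slca m n r "\<lambda>t. Aj (- t)" using assms surj_rfl by unfold_locales auto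
  obtain c1 where c1: "(\<forall>u. series m n u \<and> deg_plus m n u = 0 \<longrightarrow>
       (\<exists>h::int. - int c1 \<le> h \<and> h \<le> int c1 \<and>
          (\<exists>w. series m n w \<and> deg_plus m n w = ereal (real_of_int h) \<and> lca m n r Aj w = u))) \<and>
    (\<forall>u. series m n u \<and> deg_plus m n u = 0 \<longrightarrow>
       (\<exists>h::int. - int c1 \<le> h \<and> h \<le> int c1 \<and> deg_plus m n (lca m n r Aj u) = ereal (real_of_int h)))"
    using S1.main_half by blast
  obtain c2 where c2: "(\<forall>u. series m n u \<and> deg_plus m n u = 0 \<longrightarrow>
       (\<exists>h::int. - int c2 \<le> h \<and> h \<le> int c2 \<and>
          (\<exists>w. series m n w \<and> deg_plus m n w = ereal (real_of_int h) \<and> lca m n r (\<lambda>t. Aj (- t)) w = u))) \<and>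
    (\<forall>u. series m n u \<and> deg_plus m n u = 0 \<longrightarrow>
       (\<exists>h::int. - int c2 \<le> h \<and> h \<le> int c2 \<and> deg_plus m n (lca m n r (\<lambda>t. Aj (- t)) u) = ereal (real_of_int h)))"
    using S2.main_half by blast
  have LA: "lmat_act m n A = lca m n r Aj" unfolding A_def using lmat_act_lca[OF m0] by (auto simp: fun_eq_iff)
  have bk: "lca m n r Aj (rfl x) = rfl (lca m n r (\<lambda>t. Aj (- t)) x)" for x
    using lca_rfl[of m n r "\<lambda>t. Aj (- t)" x] by simp
  have dm0: "deg_plus m n (rfl u) = 0" if "series m n u" "deg_minus m n u = 0" for u
  proof -
    have "botg n u 0" using that deg_minus_iff[OF m0 that(1), of 0] by (simp add: zero_ereal_def)
    then have "topg n (rfl u) 0" by (simp add: botg_rfl)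
    then show ?thesis using deg_plus_iff[OF m0, of n "rfl u" 0] that by (simp add: zero_ereal_def)
  qed
  have dmh: "deg_minus m n (rfl w) = ereal (real_of_int (- h))"
    if "series m n w" "deg_plus m n w = ereal (real_of_int h)" for w h
  proof -
    have "topg n w h" using that deg_plus_iff[OF m0 that(1)] by simp
    then have "botg n (rfl w) (- h)" by (simp add: botg_rfl)
    then show ?thesis using deg_minus_iff[OF m0, of n "rfl w" "- h"] that by simp
  qed
  show ?thesis
  proof (intro exI[of _ "max c1 c2"] conjI allI impI)
    fix u assume u: "series m n u \<and> deg_plus m n u = 0"
    then obtain h w where "- int c1 \<le> h" "h \<le> int c1" "series m n w"
        "deg_plus m n w = ereal (real_of_int h)" "lca m n r Aj w = u"
      using c1 by blast
    then show "\<exists>h. - int (max c1 c2) \<le> h \<and> h \<le> int (max c1 c2) \<and>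
          (\<exists>w. series m n w \<and> deg_plus m n w = ereal (real_of_int h) \<and> lmat_act m n A w = u)"
      unfolding LA by (intro exI[of _ h]) auto
  next
    fix u assume u: "series m n u \<and> deg_minus m n u = 0"
    then have "series m n (rfl u) \<and> deg_plus m n (rfl u) = 0" using dm0 by simp
    then obtain h w where hw: "- int c2 \<le> h" "h \<le> int c2" "series m n w"
        "deg_plus m n w = ereal (real_of_int h)" "lca m n r (\<lambda>t. Aj (- t)) w = rfl u"
      using c2 by blast
    have "lmat_act m n A (rfl w) = u" unfolding LA bk hw(5) by simp
    moreover have "series m n (rfl w)" using hw by simp
    moreover have "deg_minus m n (rfl w) = ereal (real_of_int (- h))" using dmh hw by blast
    ultimately show "\<exists>h. - int (max c1 c2) \<le> h \<and> h \<le> int (max c1 c2) \<and>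
          (\<exists>w. series m n w \<and> deg_minus m n w = ereal (real_of_int h) \<and> lmat_act m n A w = u)"
      using hw(1,2) by (intro exI[of _ "- h"] conjI exI[of _ "rfl w"]) auto
  next
    fix u assume u: "series m n u \<and> deg_plus m n u = 0"
    then obtain h where "- int c1 \<le> h" "h \<le> int c1" "deg_plus m n (lca m n r Aj u) = ereal (real_of_int h)"
      using c1 by blast
    then show "\<exists>h. - int (max c1 c2) \<le> h \<and> h \<le> int (max c1 c2) \<and>
          deg_plus m n (lmat_act m n A u) = ereal (real_of_int h)"
      unfolding LA by (intro exI[of _ h]) auto
  next
    fix u assume u: "series m n u \<and> deg_minus m n u = 0"
    then have "series m n (rfl u) \<and> deg_plus m n (rfl u) = 0" using dm0 by simp
    then obtain h where hw: "- int c2 \<le> h" "h \<le> int c2"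
        "deg_plus m n (lca m n r (\<lambda>t. Aj (- t)) (rfl u)) = ereal (real_of_int h)"
      using c2 by blast
    have "lca m n r (\<lambda>t. Aj (- t)) (rfl u) = rfl (lca m n r Aj u)" by (rule lca_rfl)
    then have "deg_plus m n (rfl (lca m n r Aj u)) = ereal (real_of_int h)" using hw by simp
    then have "deg_minus m n (lca m n r Aj u) = ereal (real_of_int (- h))"
      using dmh[of "rfl (lca m n r Aj u)" h] series_lca[OF m0] by simp
    then show "\<exists>h. - int (max c1 c2) \<le> h \<and> h \<le> int (max c1 c2) \<and>
          deg_minus m n (lmat_act m n A u) = ereal (real_of_int h)"
      unfolding LA using hw(1,2) by (intro exI[of _ "- h"]) auto
  qed
qed

end
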